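(* Let $A$ be a finite-dimensional unital algebra over a field of characteristic $0$, let $a\in\mathrm{LN_{alt}}(A)$, and let $L_a=(L_a)_s+(L_a)_n$ be the Jordan–Chevalley decomposition of $L_a$ in $\mathrm{End}(A)$ (semisimple plus nilpotent, commuting). Then there exist $a_s,a_n\in\mathrm{LN_{alt}}(A)$ such that $(L_a)_s=L_{a_s}$ and $(L_a)_n=L_{a_n}$.
   Context: Algebras are not necessarily associative; $(x,y,z)=(xy)z-x(yz)$ is the associator and $L_x$ is left multiplication by $x$. $\mathrm{LN_{alt}}(A)=\{a\in A:(a,x,y)=-(x,a,y)\ \forall x,y\in A\}$. *)

theory Defs
  imports Main "HOL-Computational_Algebra.Polynomial"
begin

definition associator :: "('v::ab_group_add \<Rightarrow> 'v \<Rightarrow> 'v) \<Rightarrow> 'v \<Rightarrow> 'v \<Rightarrow> 'v \<Rightarrow> 'v" where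
  "associator m x y z = m (m x y) z - m x (m y z)"

definition LN_alt :: "('v::ab_group_add \<Rightarrow> 'v \<Rightarrow> 'v) \<Rightarrow> 'v set" where
  "LN_alt m = {a. \<forall>x y. associator m a x y = - associator m x a y}"

definition Lmul :: "('v \<Rightarrow> 'v \<Rightarrow> 'v) \<Rightarrow> 'v \<Rightarrow> 'v \<Rightarrow> 'v" where
  "Lmul m x = m x"

definition poly_endo :: "('k::field \<Rightarrow> 'v \<Rightarrow> 'v) \<Rightarrow> 'k poly \<Rightarrow> ('v \<Rightarrow> 'v) \<Rightarrow> 'v \<Rightarrow> 'v::ab_group_add" where
  "poly_endo scale p f = (\<lambda>v. \<Sum>i\<le>degree p. scale (coeff p i) ((f ^^ i) v))"

text \<open>Semisimple endomorphism: annihilated by a nonzero separable polynomial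
  (equivalently its minimal polynomial has distinct roots in an algebraic closure).\<close>
definition semisimple_endo :: "('k::field \<Rightarrow> 'v \<Rightarrow> 'v) \<Rightarrow> ('v \<Rightarrow> 'v::ab_group_add) \<Rightarrow> bool" where
  "semisimple_endo scale f \<longleftrightarrow>
     (\<exists>p. p \<noteq> 0 \<and> coprime p (pderiv p) \<and> poly_endo scale p f = (\<lambda>_. 0))"

definition nilpotent_endo :: "('v \<Rightarrow> 'v::zero) \<Rightarrow> bool" where
  "nilpotent_endo f \<longleftrightarrow> (\<exists>k. (f ^^ k) = (\<lambda>_. 0))"

definition fd_unital_algebra ::
  "('k::field \<Rightarrow> 'v \<Rightarrow> 'v) \<Rightarrow> 'v set \<Rightarrow> ('v \<Rightarrow> 'v \<Rightarrow> 'v::ab_group_add) \<Rightarrow> 'v \<Rightarrow> bool" where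
  "fd_unital_algebra scale B m e \<longleftrightarrow>
     finite_dimensional_vector_space scale B \<and>
     (\<forall>x. Vector_Spaces.linear scale scale (m x)) \<and>
     (\<forall>y. Vector_Spaces.linear scale scale (\<lambda>x. m x y)) \<and>
     (\<forall>x. m e x = x \<and> m x e = x)"

end

theory Submission
  imports Defs "HOL-Library.Function_Algebras" "HOL-Algebra.Algebraic_Closure_Type"
begin

context vector_space
begin

lemma lin_add: "Vector_Spaces.linear scale scale f \<Longrightarrow> f (x + y) = f x + f y"
  by (simp add: Vector_Spaces.linear_iff)

lemma lin_scale: "Vector_Spaces.linear scale scale f \<Longrightarrow> f (scale c x) = scale c (f x)"
  by (simp add: Vector_Spaces.linear_iff)

lemma lin_zero: "Vector_Spaces.linear scale scale f \<Longrightarrow> f 0 = 0"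
proof -
  assume f: "Vector_Spaces.linear scale scale f"
  have "f 0 = f 0 + f 0" using lin_add[OF f, of 0 0] by simp
  thus "f 0 = 0" by simp
qed

lemma lin_sum: "Vector_Spaces.linear scale scale f \<Longrightarrow> f (sum g A) = (\<Sum>a\<in>A. f (g a))"
  by (induct A rule: infinite_finite_induct) (auto simp: lin_add lin_zero)

lemma lin_diff: "Vector_Spaces.linear scale scale f \<Longrightarrow> f (x - y) = f x - f y"
proof -
  assume f: "Vector_Spaces.linear scale scale f"
  have "f (x - y) + f y = f x" using lin_add[OF f, of "x - y" y] by simp
  thus "f (x - y) = f x - f y" by (simp add: eq_diff_eq)
qed

lemma linI: "(\<And>x y. f (x + y) = f x + f y) \<Longrightarrow> (\<And>c x. f (scale c x) = scale c (f x))
   \<Longrightarrow> Vector_Spaces.linear scale scale f"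
  by (simp add: Vector_Spaces.linear_iff vector_space_axioms)

lemma pe_sum_less:
  assumes "Polynomial.degree p < n"
  shows "poly_endo scale p f v = (\<Sum>i<n. scale (Polynomial.coeff p i) ((f^^i) v))"
proof -
  have "poly_endo scale p f v = (\<Sum>i<Suc (Polynomial.degree p). scale (Polynomial.coeff p i) ((f^^i) v))"
    unfolding poly_endo_def by (simp add: lessThan_Suc_atMost)
  also have "\<dots> = (\<Sum>i<n. scale (Polynomial.coeff p i) ((f^^i) v))"
    by (rule sum.mono_neutral_left) (use assms in \<open>auto simp: coeff_eq_0\<close>)
  finally show ?thesis .
qed

lemma pe_0 [simp]: "poly_endo scale 0 f v = 0"
  unfolding poly_endo_def by simp

lemma pe_const [simp]: "poly_endo scale [:c:] f v = scale c v"
  unfolding poly_endo_def by simp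

lemma pe_pCons:
  assumes f: "Vector_Spaces.linear scale scale f"
  shows "poly_endo scale (pCons c p) f v = scale c v + f (poly_endo scale p f v)"
proof -
  define n where "n = Suc (Polynomial.degree p)"
  have d1: "Polynomial.degree (pCons c p) < Suc n" unfolding n_def by (simp add: degree_pCons_le le_imp_less_Suc)
  have d2: "Polynomial.degree p < n" unfolding n_def by simp
  have "poly_endo scale (pCons c p) f v = (\<Sum>i<Suc n. scale (Polynomial.coeff (pCons c p) i) ((f^^i) v))"
    by (rule pe_sum_less[OF d1])
  also have "\<dots> = scale c v + (\<Sum>i<n. scale (Polynomial.coeff p i) ((f^^(Suc i)) v))"
    by (subst sum.lessThan_Suc_shift) simp
  also have "(\<Sum>i<n. scale (Polynomial.coeff p i) ((f^^(Suc i)) v)) = (\<Sum>i<n. f (scale (Polynomial.coeff p i) ((f^^i) v)))"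
    by (simp add: lin_scale[OF f])
  also have "\<dots> = f (\<Sum>i<n. scale (Polynomial.coeff p i) ((f^^i) v))"
    by (simp add: lin_sum[OF f])
  also have "(\<Sum>i<n. scale (Polynomial.coeff p i) ((f^^i) v)) = poly_endo scale p f v"
    by (rule pe_sum_less[OF d2, symmetric])
  finally show ?thesis .
qed

lemma pe_add: "poly_endo scale (p + q) f v = poly_endo scale p f v + poly_endo scale q f v"
proof -
  define n where "n = Suc (max (Polynomial.degree p) (Polynomial.degree q))"
  have "Polynomial.degree (p + q) < n" "Polynomial.degree p < n" "Polynomial.degree q < n" unfolding n_def
    using degree_add_le_max[of p q] by auto
  thus ?thesis
    by (simp add: pe_sum_less scale_left_distrib sum.distrib)
qed

lemma pe_smult: "poly_endo scale (Polynomial.smult c p) f v = scale c (poly_endo scale p f v)"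
proof -
  define n where "n = Suc (Polynomial.degree p)"
  have "Polynomial.degree (Polynomial.smult c p) < n" "Polynomial.degree p < n" unfolding n_def
    using degree_smult_le[of c p] by auto
  thus ?thesis
    by (simp add: pe_sum_less scale_sum_right)
qed

lemma pe_minus: "poly_endo scale (- p) f v = - poly_endo scale p f v"
proof -
  have "- p = Polynomial.smult (-1) p" by simp
  thus ?thesis by (simp add: pe_smult del: smult_1_left smult_minus_left)
qed

lemma pe_diff: "poly_endo scale (p - q) f v = poly_endo scale p f v - poly_endo scale q f v"
  using pe_add[of p "-q" f v] pe_minus[of q f v] by simp

lemma pe_additive:
  assumes f: "Vector_Spaces.linear scale scale f"
  shows "poly_endo scale p f (x + y) = poly_endo scale p f x + poly_endo scale p f y"
proof (induct p)
  case (pCons c p)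
  show ?case using pCons(2) by (simp add: pe_pCons[OF f] lin_add[OF f] scale_right_distrib ac_simps)
qed simp

lemma pe_homog:
  assumes f: "Vector_Spaces.linear scale scale f"
  shows "poly_endo scale p f (scale c x) = scale c (poly_endo scale p f x)"
proof (induct p)
  case (pCons a p)
  show ?case using pCons(2) by (simp add: pe_pCons[OF f] lin_scale[OF f] scale_right_distrib mult.commute)
qed simp

lemma pe_linear:
  assumes f: "Vector_Spaces.linear scale scale f"
  shows "Vector_Spaces.linear scale scale (poly_endo scale p f)"
  by (rule linI) (simp_all add: pe_additive[OF f] pe_homog[OF f])

lemma pe_mult:
  assumes f: "Vector_Spaces.linear scale scale f"
  shows "poly_endo scale (p * q) f v = poly_endo scale p f (poly_endo scale q f v)"
proof (induct p)
  case (pCons c p)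
  show ?case
    by (simp add: mult_pCons_left pe_add pe_smult pe_pCons[OF f] pCons(2))
qed simp

lemma pe_commute:
  assumes f: "Vector_Spaces.linear scale scale f" and g: "Vector_Spaces.linear scale scale g" and fg: "\<And>v. g (f v) = f (g v)"
  shows "g (poly_endo scale p f v) = poly_endo scale p f (g v)"
proof (induct p arbitrary: v)
  case 0
  then show ?case by (simp add: lin_zero[OF g])
next
  case (pCons c p)
  show ?case
    by (simp add: pe_pCons[OF f] lin_add[OF g] lin_scale[OF g] fg pCons(2))
qed

lemma pe_X:
  assumes f: "Vector_Spaces.linear scale scale f"
  shows "poly_endo scale [:0,1:] f v = f v"
  by (simp add: pe_pCons[OF f] lin_zero[OF f])

lemma pe_pcompose:
  assumes f: "Vector_Spaces.linear scale scale f"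
  shows "poly_endo scale (pcompose p q) f v = poly_endo scale p (poly_endo scale q f) v"
proof (induct p arbitrary: v)
  case (pCons a p)
  show ?case
    by (simp add: pcompose_pCons pe_add pe_mult[OF f] pe_pCons[OF pe_linear[OF f]] pCons(2))
qed simp

lemma pe_one [simp]: "poly_endo scale 1 f v = v"
  using pe_const[of 1 f v] by (simp add: one_pCons)

end


definition ev2 :: "('k::field \<Rightarrow> 'w::ab_group_add \<Rightarrow> 'w) \<Rightarrow> 'k poly poly \<Rightarrow> ('w \<Rightarrow> 'w) \<Rightarrow> ('w \<Rightarrow> 'w) \<Rightarrow> 'w \<Rightarrow> 'w"
  where "ev2 sc F Xo Yo v = (\<Sum>j\<le>Polynomial.degree F. poly_endo sc (Polynomial.coeff F j) Xo ((Yo^^j) v))"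

locale comm_pair = vector_space scale for scale :: "'a::field \<Rightarrow> 'b::ab_group_add \<Rightarrow> 'b" +
  fixes Xo Yo :: "'b \<Rightarrow> 'b"
  assumes linX: "Vector_Spaces.linear scale scale Xo"
    and linY: "Vector_Spaces.linear scale scale Yo"
    and XY: "\<And>v. Xo (Yo v) = Yo (Xo v)"
begin

lemma linYpow: "Vector_Spaces.linear scale scale (Yo^^j)"
proof (induct j)
  case 0
  show ?case by (rule linI) simp_all
next
  case (Suc j)
  show ?case by (rule linI) (simp_all add: lin_add[OF Suc] lin_scale[OF Suc] lin_add[OF linY] lin_scale[OF linY])
qed

lemma Y_pe: "Yo (poly_endo scale c Xo v) = poly_endo scale c Xo (Yo v)"
  by (rule pe_commute[OF linX linY]) (simp add: XY)

lemma Ypow_pe: "(Yo^^j) (poly_endo scale c Xo v) = poly_endo scale c Xo ((Yo^^j) v)"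
  by (induct j) (simp_all add: Y_pe)

lemma ev2_sum_less:
  assumes "Polynomial.degree F < n"
  shows "ev2 scale F Xo Yo v = (\<Sum>j<n. poly_endo scale (Polynomial.coeff F j) Xo ((Yo^^j) v))"
proof -
  have "ev2 scale F Xo Yo v = (\<Sum>j<Suc (Polynomial.degree F). poly_endo scale (Polynomial.coeff F j) Xo ((Yo^^j) v))"
    unfolding ev2_def by (simp add: lessThan_Suc_atMost)
  also have "\<dots> = (\<Sum>j<n. poly_endo scale (Polynomial.coeff F j) Xo ((Yo^^j) v))"
    by (rule sum.mono_neutral_left) (use assms in \<open>auto simp: coeff_eq_0\<close>)
  finally show ?thesis .
qed

lemma ev2_0 [simp]: "ev2 scale 0 Xo Yo v = 0"
  unfolding ev2_def by simp

lemma ev2_const [simp]: "ev2 scale [:c:] Xo Yo v = poly_endo scale c Xo v"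
  unfolding ev2_def by simp

lemma ev2_pCons: "ev2 scale (pCons c F) Xo Yo v = poly_endo scale c Xo v + Yo (ev2 scale F Xo Yo v)"
proof -
  define n where "n = Suc (Polynomial.degree F)"
  have d1: "Polynomial.degree (pCons c F) < Suc n" unfolding n_def by (simp add: degree_pCons_le le_imp_less_Suc)
  have d2: "Polynomial.degree F < n" unfolding n_def by simp
  have "ev2 scale (pCons c F) Xo Yo v = (\<Sum>j<Suc n. poly_endo scale (Polynomial.coeff (pCons c F) j) Xo ((Yo^^j) v))"
    by (rule ev2_sum_less[OF d1])
  also have "\<dots> = poly_endo scale c Xo v + (\<Sum>j<n. poly_endo scale (Polynomial.coeff F j) Xo ((Yo^^(Suc j)) v))"
    by (subst sum.lessThan_Suc_shift) simp
  also have "(\<Sum>j<n. poly_endo scale (Polynomial.coeff F j) Xo ((Yo^^(Suc j)) v))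
      = (\<Sum>j<n. Yo (poly_endo scale (Polynomial.coeff F j) Xo ((Yo^^j) v)))"
    by (simp add: Y_pe)
  also have "\<dots> = Yo (\<Sum>j<n. poly_endo scale (Polynomial.coeff F j) Xo ((Yo^^j) v))"
    by (simp add: lin_sum[OF linY])
  also have "(\<Sum>j<n. poly_endo scale (Polynomial.coeff F j) Xo ((Yo^^j) v)) = ev2 scale F Xo Yo v"
    by (rule ev2_sum_less[OF d2, symmetric])
  finally show ?thesis .
qed

lemma ev2_add: "ev2 scale (F + G) Xo Yo v = ev2 scale F Xo Yo v + ev2 scale G Xo Yo v"
proof -
  define n where "n = Suc (max (Polynomial.degree F) (Polynomial.degree G))"
  have "Polynomial.degree (F + G) < n" "Polynomial.degree F < n" "Polynomial.degree G < n" unfolding n_def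
    using degree_add_le_max[of F G] by auto
  thus ?thesis
    by (simp add: ev2_sum_less pe_add sum.distrib)
qed

lemma ev2_minus: "ev2 scale (- F) Xo Yo v = - ev2 scale F Xo Yo v"
proof -
  define n where "n = Suc (Polynomial.degree F)"
  have "Polynomial.degree (- F) < n" "Polynomial.degree F < n" unfolding n_def by auto
  thus ?thesis
    by (simp add: ev2_sum_less pe_minus sum_negf)
qed

lemma ev2_diff: "ev2 scale (F - G) Xo Yo v = ev2 scale F Xo Yo v - ev2 scale G Xo Yo v"
  using ev2_add[of F "- G" v] ev2_minus[of G v] by simp

lemma ev2_additive: "ev2 scale F Xo Yo (x + y) = ev2 scale F Xo Yo x + ev2 scale F Xo Yo y"
proof (induct F arbitrary: x y)
  case (pCons c F)
  show ?case by (simp add: ev2_pCons pCons(2) pe_additive[OF linX] lin_add[OF linY] ac_simps)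
qed simp

lemma ev2_homog: "ev2 scale F Xo Yo (scale c x) = scale c (ev2 scale F Xo Yo x)"
proof (induct F arbitrary: x)
  case (pCons a F)
  show ?case by (simp add: ev2_pCons pCons(2) pe_homog[OF linX] lin_scale[OF linY] scale_right_distrib)
qed simp

lemma ev2_linear: "Vector_Spaces.linear scale scale (ev2 scale F Xo Yo)"
  by (rule linI) (simp_all add: ev2_additive ev2_homog)

lemma ev2_smult: "ev2 scale (Polynomial.smult c F) Xo Yo v = poly_endo scale c Xo (ev2 scale F Xo Yo v)"
proof (induct F arbitrary: v)
  case 0
  then show ?case by (simp add: lin_zero[OF pe_linear[OF linX]])
next
  case (pCons d F)
  show ?case
    by (simp add: ev2_pCons pCons(2) pe_mult[OF linX] Y_pe pe_additive[OF linX])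
qed

lemma ev2_mult: "ev2 scale (F * G) Xo Yo v = ev2 scale F Xo Yo (ev2 scale G Xo Yo v)"
proof (induct F arbitrary: v)
  case (pCons c F)
  show ?case
    by (simp add: mult_pCons_left ev2_add ev2_smult ev2_pCons pCons(2))
qed simp

lemma ev2_power: "ev2 scale (F ^ n) Xo Yo v = ((ev2 scale F Xo Yo)^^n) v"
  by (induct n arbitrary: v) (simp_all add: ev2_mult one_pCons)

lemma ev2_one [simp]: "ev2 scale 1 Xo Yo v = v"
  unfolding ev2_def by simp

lemma ev2_Y: "ev2 scale [:0, 1:] Xo Yo v = Yo v"
  by (simp add: ev2_pCons lin_zero[OF linY] flip: one_pCons)

lemma ev2_X: "ev2 scale [:[:0, 1:]:] Xo Yo v = Xo v"
  by (simp add: pe_X[OF linX])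

lemma ev2_lift: "ev2 scale (poly (map_poly (\<lambda>c. [:[:c:]:]) P) E) Xo Yo v = poly_endo scale P (ev2 scale E Xo Yo) v"
proof (induct P arbitrary: v)
  case (pCons a P)
  have "ev2 scale (poly (map_poly (\<lambda>c. [:[:c:]:]) (pCons a P)) E) Xo Yo v
      = ev2 scale ([:[:a:]:] + E * poly (map_poly (\<lambda>c. [:[:c:]:]) P) E) Xo Yo v"
    by (simp add: map_poly_pCons)
  also have "\<dots> = scale a v + ev2 scale E Xo Yo (poly_endo scale P (ev2 scale E Xo Yo) v)"
    by (simp add: ev2_add ev2_mult pCons(2))
  also have "\<dots> = poly_endo scale (pCons a P) (ev2 scale E Xo Yo) v"
    by (simp add: pe_pCons[OF ev2_linear])
  finally show ?case .
qed simp

lemma ev2_cy: "ev2 scale (map_poly (\<lambda>c. [:c:]) m) Xo Yo v = poly_endo scale m Yo v"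
proof (induct m arbitrary: v)
  case (pCons a m)
  show ?case by (simp add: map_poly_pCons ev2_pCons pCons(2) pe_pCons[OF linY])
qed simp

end


lemma map_poly_hom_add:
  assumes "\<And>a b. f (a + b) = f a + f b" "f 0 = 0"
  shows "map_poly f (p + q) = map_poly f p + map_poly f q"
  by (rule poly_eqI) (simp add: coeff_map_poly assms)

lemma map_poly_hom_mult:
  fixes f :: "'a::comm_ring_1 \<Rightarrow> 'b::comm_ring_1"
  assumes add: "\<And>a b. f (a + b) = f a + f b" and z: "f 0 = 0" and mul: "\<And>a b. f (a * b) = f a * f b"
  shows "map_poly f (p * q) = map_poly f p * map_poly f q"
proof (induct p)
  case 0
  then show ?case by simp
next
  case (pCons a p)
  have "map_poly f (pCons a p * q) = map_poly f (Polynomial.smult a q + pCons 0 (p * q))"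
    by simp
  also have "\<dots> = Polynomial.smult (f a) (map_poly f q) + pCons 0 (map_poly f p * map_poly f q)"
    by (simp add: map_poly_hom_add[OF add z] map_poly_smult z mul map_poly_pCons pCons(2))
  also have "\<dots> = map_poly f (pCons a p) * map_poly f q"
    by (simp add: map_poly_pCons z)
  finally show ?case .
qed

lemma hom_poly_map_poly:
  fixes \<Phi> :: "'r::comm_ring_1 \<Rightarrow> 's::comm_ring_1" and \<iota> :: "'a::zero \<Rightarrow> 'r"
  assumes add: "\<And>a b. \<Phi> (a + b) = \<Phi> a + \<Phi> b" and z: "\<Phi> 0 = 0" and mul: "\<And>a b. \<Phi> (a * b) = \<Phi> a * \<Phi> b"
    and iz: "\<iota> 0 = 0"
  shows "\<Phi> (poly (map_poly \<iota> P) E) = poly (map_poly (\<lambda>c. \<Phi> (\<iota> c)) P) (\<Phi> E)"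
proof (induct P)
  case 0
  then show ?case by (simp add: z)
next
  case (pCons a P)
  show ?case by (simp add: map_poly_pCons iz z add mul pCons(2))
qed

lemma taylor1:
  fixes p :: "'r::idom poly"
  shows "\<exists>Q. poly p (a + d) = poly p a + d * poly (pderiv p) a + d * d * Q"
proof (induct p)
  case 0
  then show ?case by (intro exI[of _ 0]) simp
next
  case (pCons c p)
  then obtain Q where Q: "poly p (a + d) = poly p a + d * poly (pderiv p) a + d * d * Q" by blast
  show ?case
    by (rule exI[of _ "poly (pderiv p) a + (a + d) * Q"])
       (simp add: pderiv_pCons Q algebra_simps)
qed

lemma taylor0:
  fixes p :: "'r::idom poly"
  shows "\<exists>Q. poly p (a + d) = poly p a + d * Q"
proof -
  obtain Q where "poly p (a + d) = poly p a + d * poly (pderiv p) a + d * d * Q"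
    using taylor1 by blast
  thus ?thesis by (intro exI[of _ "poly (pderiv p) a + d * Q"]) (simp add: algebra_simps)
qed

lemma poly_diff_dvd:
  fixes p :: "'r::idom poly"
  shows "(a - b) dvd (poly p a - poly p b)"
proof -
  obtain Q where "poly p (b + (a - b)) = poly p b + (a - b) * Q" using taylor0 by blast
  thus ?thesis by simp
qed

lemma pow_sum_dvd:
  fixes a b :: "'r::comm_ring_1"
  shows "\<exists>R. (a + b) ^ n = b ^ n + a * R"
proof (induct n)
  case 0
  then show ?case by (intro exI[of _ 0]) simp
next
  case (Suc n)
  then obtain R where R: "(a + b) ^ n = b ^ n + a * R" by blast
  show ?case by (rule exI[of _ "b ^ n + (a + b) * R"]) (simp add: R algebra_simps)
qed

section \<open>Single-variable Newton\<close>

lemma pderiv_map_const: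
  "pderiv (map_poly (\<lambda>x. [:x:]) p) = map_poly (\<lambda>x. [:x:]) (pderiv (p :: 'a::idom poly))"
  by (rule poly_eqI) (simp add: coeff_pderiv coeff_map_poly of_nat_poly)

lemma pcompose_taylor:
  fixes P h d :: "'a::idom poly"
  shows "\<exists>Q. pcompose P (h + d) = pcompose P h + d * pcompose (pderiv P) h + d * d * Q"
  using taylor1[of "map_poly (\<lambda>x. [:x:]) P" h d]
  by (simp add: pcompose_altdef pderiv_map_const)

lemma newton1:
  fixes P :: "'k::field poly"
  assumes bez: "u * P + v * pderiv P = 1"
  shows "\<exists>h. P dvd (h - [:0,1:]) \<and> P ^ Suc n dvd pcompose P h"
proof (induct n)
  case 0
  show ?case by (intro exI[of _ "[:0,1:]"]) simp
next
  case (Suc n)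
  then obtain h where h1: "P dvd (h - [:0,1:])" and h2: "P ^ Suc n dvd pcompose P h" by blast
  define d where "d = - (pcompose P h * pcompose v h)"
  obtain Q where Q: "pcompose P (h + d) = pcompose P h + d * pcompose (pderiv P) h + d * d * Q"
    using pcompose_taylor by blast
  have c1: "P dvd (pcompose (pderiv P) h * pcompose v h - pcompose (pderiv P) [:0,1:] * pcompose v [:0,1:])"
  proof -
    have "(h - [:0,1:]) dvd (pcompose (pderiv P * v) h - pcompose (pderiv P * v) [:0,1:])"
      using poly_diff_dvd[of h "[:0,1:]" "map_poly (\<lambda>x. [:x:]) (pderiv P * v)"]
      by (simp add: pcompose_altdef)
    thus ?thesis using h1 by (simp add: pcompose_mult dvd_trans)
  qed
  have c1': "P dvd (pcompose (pderiv P) h * pcompose v h - pderiv P * v)"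
    using c1 by simp
  have c3: "P dvd (1 - pcompose (pderiv P) h * pcompose v h)"
  proof -
    have e: "1 - pcompose (pderiv P) h * pcompose v h
        = u * P - (pcompose (pderiv P) h * pcompose v h - pderiv P * v)"
      using bez by (simp add: algebra_simps)
    show ?thesis unfolding e by (rule dvd_diff) (simp_all add: c1')
  qed
  have eq: "pcompose P (h + d) = pcompose P h * (1 - pcompose (pderiv P) h * pcompose v h)
       + pcompose P h * pcompose P h * (pcompose v h * pcompose v h * Q)"
    unfolding Q by (simp add: d_def algebra_simps)
  have t1: "P ^ Suc (Suc n) dvd pcompose P h * (1 - pcompose (pderiv P) h * pcompose v h)"
    using mult_dvd_mono[OF h2 c3] by (simp add: mult.commute)
  have t2: "P ^ Suc (Suc n) dvd pcompose P h * pcompose P h"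
  proof -
    have "P ^ Suc n * P ^ Suc n dvd pcompose P h * pcompose P h"
      using mult_dvd_mono[OF h2 h2] .
    moreover have "P ^ Suc (Suc n) dvd P ^ Suc n * P ^ Suc n"
      by (simp add: power_add[symmetric] le_imp_power_dvd)
    ultimately show ?thesis using dvd_trans by blast
  qed
  have "P ^ Suc (Suc n) dvd pcompose P (h + d)"
    unfolding eq using t1 t2 by (simp add: dvd_add dvd_mult2)
  moreover have "P dvd (h + d - [:0,1:])"
  proof -
    have "P dvd d" unfolding d_def using h2 by (simp add: dvd_mult2 dvd_trans[OF dvd_power[of "Suc n" P]])
    thus ?thesis using h1 by (metis add_diff_eq diff_add_eq dvd_add)
  qed
  ultimately show ?case by blast
qed


definition xx :: "'a::comm_ring_1 poly poly" where "xx = [:[:0,1:]:]"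
definition yy :: "'a::comm_ring_1 poly poly" where "yy = [:0,1:]"
definition cxp :: "'a::comm_ring_1 poly \<Rightarrow> 'a poly poly" where "cxp p = [:p:]"
definition lift3 :: "'a::comm_ring_1 poly \<Rightarrow> 'a poly poly poly" where "lift3 P = map_poly (\<lambda>c. [:[:c:]:]) P"
definition sxy :: "'a::comm_ring_1 poly \<Rightarrow> 'a poly poly" where "sxy P = poly (lift3 P) (xx + yy)"

lemma cxp_add: "cxp (p + q) = cxp p + cxp q" by (simp add: cxp_def)
lemma cxp_mult: "cxp (p * q) = cxp p * cxp q" by (simp add: cxp_def)
lemma cxp_diff: "cxp (p - q) = cxp p - cxp q" by (simp add: cxp_def)
lemma cxp_one: "cxp 1 = 1" by (simp add: cxp_def)
lemma xx_cxp: "xx = cxp [:0,1:]" by (simp add: xx_def cxp_def)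

lemma lift3_add: "lift3 (p + q) = lift3 p + lift3 q"
  unfolding lift3_def by (rule map_poly_hom_add) simp_all

lemma lift3_mult: "lift3 (p * q) = lift3 p * lift3 q"
  unfolding lift3_def by (rule map_poly_hom_mult) simp_all

lemma lift3_pderiv: "pderiv (lift3 P) = lift3 (pderiv (P :: 'a::idom poly))"
  unfolding lift3_def by (rule poly_eqI) (simp add: coeff_pderiv coeff_map_poly of_nat_poly)

lemma lift3_one [simp]: "lift3 1 = 1" by (simp add: lift3_def flip: one_pCons)
lemma lift3_zero [simp]: "lift3 0 = 0" by (simp add: lift3_def)

lemma plift_add: "poly (lift3 (p + q)) w = poly (lift3 p) w + poly (lift3 q) w"
  by (simp add: lift3_add)
lemma plift_mult: "poly (lift3 (p * q)) w = poly (lift3 p) w * poly (lift3 q) w"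
  by (simp add: lift3_mult)
lemma plift_power: "poly (lift3 (p ^ n)) w = poly (lift3 p) w ^ n"
  by (induct n) (simp_all add: plift_mult)

lemma plift_pcompose: "poly (lift3 (pcompose P h)) w = poly (lift3 P) (poly (lift3 h) w)"
proof -
  have "poly (lift3 (poly (map_poly (\<lambda>x. [:x:]) P) h)) w
      = poly (map_poly (\<lambda>c. poly (lift3 [:c:]) w) P) (poly (lift3 h) w)"
    by (rule hom_poly_map_poly) (simp_all add: plift_add plift_mult)
  moreover have "(\<lambda>c. poly (lift3 [:c:]) w) = (\<lambda>c. [:[:c:]:])"
    by (rule ext) (simp add: lift3_def map_poly_pCons)
  ultimately show ?thesis by (simp add: pcompose_altdef lift3_def)
qed

lemma plift_xx: "poly (lift3 g) xx = cxp g"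
proof -
  have "(\<lambda>q. [:q:]) (poly (map_poly (\<lambda>c. [:c:]) g) [:0,1:])
      = poly (map_poly (\<lambda>c. (\<lambda>q. [:q:]) [:c:]) g) ((\<lambda>q. [:q:]) [:0,1:])"
    by (rule hom_poly_map_poly) simp_all
  moreover have "poly (map_poly (\<lambda>c. [:c:]) g) [:0,1:] = g"
    using pcompose_idR[of g] by (simp add: pcompose_altdef)
  ultimately show ?thesis by (simp add: cxp_def xx_def lift3_def)
qed

section \<open>Two-variable Hensel\<close>

lemma hensel2:
  fixes P :: "'k::field poly"
  assumes bez: "u * P + v * pderiv P = 1"
  shows "\<exists>h A B. sxy h - xx = A * cxp P + B * yy ^ K"
proof -
  define JJ where "JJ F \<longleftrightarrow> (\<exists>A B. F = A * cxp P + B * yy ^ K)" for F :: "'k poly poly"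
  have J0: "JJ 0" unfolding JJ_def by (intro exI[of _ 0]) simp
  have Jadd: "JJ (F + G)" if hF: "JJ F" and hG: "JJ G" for F G
  proof -
    obtain A B where F: "F = A * cxp P + B * yy ^ K"
      using hF[unfolded JJ_def] by blast
    obtain A' B' where G: "G = A' * cxp P + B' * yy ^ K"
      using hG[unfolded JJ_def] by blast
    note F G
    thus ?thesis unfolding JJ_def by (intro exI[of _ "A + A'"] exI[of _ "B + B'"]) (simp add: algebra_simps)
  qed
  have Jmult: "JJ (G * F)" if hF: "JJ F" for F G
  proof -
    obtain A B where F: "F = A * cxp P + B * yy ^ K"
      using hF[unfolded JJ_def] by blast
    thus ?thesis unfolding JJ_def by (intro exI[of _ "G * A"] exI[of _ "G * B"]) (simp add: algebra_simps)
  qed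
  have Jminus: "JJ (- F)" if "JJ F" for F
    using Jmult[OF that, of "-1"] by simp
  have Jdiff: "JJ (F - G)" if "JJ F" "JJ G" for F G
    using Jadd[OF that(1) Jminus[OF that(2)]] by simp
  have JP: "JJ (cxp P)" unfolding JJ_def by (intro exI[of _ 1] exI[of _ 0]) simp
  have JY: "JJ (yy ^ K)" unfolding JJ_def by (intro exI[of _ 0] exI[of _ 1]) simp

  obtain h where h1: "P dvd (h - [:0,1:])" and h2: "P ^ Suc K dvd pcompose P h"
    using newton1[OF bez] by blast
  obtain q where hq: "h - [:0,1:] = P * q" using h1 by (elim dvdE)
  have "P ^ K dvd P ^ Suc K" by (rule le_imp_power_dvd) simp
  hence "P ^ K dvd pcompose P h" using h2 by (rule dvd_trans)
  then obtain g where hg: "pcompose P h = P ^ K * g" by (elim dvdE)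
  define E where "E = sxy h"
  define D where "D = E - xx"
  obtain G1 where G1: "poly (lift3 h) (xx + yy) = poly (lift3 h) xx + yy * G1"
    using taylor0 by blast
  have ED: "E = cxp h + yy * G1" unfolding E_def sxy_def G1 plift_xx ..
  have "cxp h - xx = cxp P * cxp q"
    by (simp add: xx_cxp flip: cxp_diff cxp_mult hq)
  hence D1: "JJ (D - yy * G1)"
    unfolding D_def ED using Jmult[OF JP, of "cxp q"] by (simp add: algebra_simps)
  obtain G2 where G2: "poly (lift3 P) (xx + yy) = poly (lift3 P) xx + yy * G2"
    using taylor0 by blast
  have sP: "sxy P = cxp P + yy * G2" unfolding sxy_def G2 plift_xx ..
  obtain R where R: "(cxp P + yy * G2) ^ K = (yy * G2) ^ K + cxp P * R"
    using pow_sum_dvd by blast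
  have PE: "poly (lift3 P) E = sxy P ^ K * sxy g"
    unfolding E_def sxy_def by (simp add: plift_pcompose[symmetric] hg plift_mult plift_power)
  have JPE: "JJ (poly (lift3 P) E)"
  proof -
    have "poly (lift3 P) E = (G2 ^ K * sxy g) * yy ^ K + (R * sxy g) * cxp P"
      unfolding PE sP R by (simp add: algebra_simps power_mult_distrib)
    thus ?thesis using Jadd[OF Jmult[OF JY, of "G2 ^ K * sxy g"] Jmult[OF JP, of "R * sxy g"]] by simp
  qed
  obtain Q3 where Q3: "poly (lift3 P) (xx + D) = poly (lift3 P) xx + D * poly (pderiv (lift3 P)) xx + D * D * Q3"
    using taylor1 by blast
  have "xx + D = E" unfolding D_def by simp
  hence PE2: "poly (lift3 P) E = cxp P + D * cxp (pderiv P) + D * D * Q3"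
    using Q3 by (simp add: lift3_pderiv plift_xx)
  have J2: "JJ (D * cxp (pderiv P) + D * D * Q3)"
  proof -
    have "D * cxp (pderiv P) + D * D * Q3 = poly (lift3 P) E - cxp P" using PE2 by simp
    thus ?thesis using Jdiff[OF JPE JP] by simp
  qed
  have cv: "cxp v * cxp (pderiv P) = 1 - cxp u * cxp P"
    using arg_cong[OF bez, of cxp] by (simp add: cxp_add cxp_mult cxp_one algebra_simps)
  define c where "c = Q3 * cxp v"
  have J3: "JJ (D + D * D * c)"
  proof -
    have "cxp v * (D * cxp (pderiv P) + D * D * Q3) + (D * cxp u) * cxp P
        = D * (cxp v * cxp (pderiv P) + cxp u * cxp P) + D * D * (Q3 * cxp v)"
      by (simp add: algebra_simps)
    also have "\<dots> = D + D * D * c" using cv by (simp add: c_def)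
    finally have "D + D * D * c = cxp v * (D * cxp (pderiv P) + D * D * Q3) + (D * cxp u) * cxp P" by simp
    thus ?thesis using Jadd[OF Jmult[OF J2, of "cxp v"] Jmult[OF JP, of "D * cxp u"]] by simp
  qed
  define w where "w = - (G1 * c)"
  have J4: "JJ (D - yy * w * D)"
  proof -
    have eq: "D - yy * w * D = (D + D * D * c) - (D * c) * (D - yy * G1)"
      unfolding w_def by (simp add: algebra_simps)
    show ?thesis unfolding eq by (rule Jdiff[OF J3 Jmult[OF D1, of "D * c"]])
  qed
  have J5: "JJ (D - (yy * w) ^ j * D)" for j
  proof (induct j)
    case 0
    then show ?case using J0 by simp
  next
    case (Suc j)
    have eq: "D - (yy * w) ^ Suc j * D = (D - yy * w * D) + (yy * w) * (D - (yy * w) ^ j * D)"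
      by (simp add: algebra_simps)
    show ?case unfolding eq by (rule Jadd[OF J4 Jmult[OF Suc, of "yy * w"]])
  qed
  have eq2: "(yy * w) ^ K * D = (w ^ K * D) * yy ^ K"
    by (simp add: power_mult_distrib algebra_simps)
  have "JJ ((yy * w) ^ K * D)"
    unfolding eq2 by (rule Jmult[OF JY])
  hence "JJ ((D - (yy * w) ^ K * D) + (yy * w) ^ K * D)" by (rule Jadd[OF J5[of K]])
  hence "JJ D" by simp
  thus ?thesis unfolding JJ_def D_def E_def by blast
qed

section \<open>Nilpotency of sums\<close>

lemma nil2:
  fixes a b :: "'r::comm_ring_1"
  shows "\<exists>A B. (a + b) ^ (K + K) = A * a ^ K + B * b ^ K"
proof -
  define n where "n = K + K"
  define f where "f k = (if K \<le> k then of_nat (n choose k) * a ^ (k - K) * b ^ (n - k) else 0)" for k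
  define g where "g k = (if K \<le> k then 0 else of_nat (n choose k) * a ^ k * b ^ (n - k - K))" for k
  have t: "of_nat (n choose k) * a ^ k * b ^ (n - k) = a ^ K * f k + b ^ K * g k" if "k \<le> n" for k
  proof (cases "K \<le> k")
    case True
    then have "a ^ k = a ^ K * a ^ (k - K)" by (simp add: power_add[symmetric])
    then show ?thesis using True by (simp add: f_def g_def algebra_simps)
  next
    case False
    then have "b ^ (n - k) = b ^ K * b ^ (n - k - K)" unfolding n_def by (simp add: power_add[symmetric])
    then show ?thesis using False by (simp add: f_def g_def algebra_simps)
  qed
  have "(a + b) ^ n = (\<Sum>k\<le>n. of_nat (n choose k) * a ^ k * b ^ (n - k))"
    by (rule binomial_ring)
  also have "\<dots> = (\<Sum>k\<le>n. a ^ K * f k + b ^ K * g k)"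
    by (rule sum.cong) (simp_all add: t)
  also have "\<dots> = (\<Sum>k\<le>n. f k) * a ^ K + (\<Sum>k\<le>n. g k) * b ^ K"
    by (simp add: sum.distrib sum_distrib_left mult.commute)
  finally show ?thesis unfolding n_def by blast
qed


definition cyp :: "'a::comm_ring_1 poly \<Rightarrow> 'a poly poly" where "cyp p = map_poly (\<lambda>c. [:c:]) p"

definition evp :: "'k::field alg_closure \<Rightarrow> 'k alg_closure \<Rightarrow> 'k poly poly \<Rightarrow> 'k alg_closure" where
  "evp \<alpha> \<beta> F = poly (map_poly (\<lambda>c. poly (map_poly to_ac c) \<alpha>) F) \<beta>"

lemma map_poly_const [simp]: "f 0 = 0 \<Longrightarrow> map_poly f [:c:] = [:f c:]"
  by (simp add: map_poly_pCons)

lemma mac_add: "map_poly to_ac (p + q) = map_poly to_ac p + map_poly to_ac q"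
  by (rule map_poly_hom_add) simp_all

lemma mac_mult: "map_poly to_ac (p * q) = map_poly to_ac p * map_poly to_ac q"
  by (rule map_poly_hom_mult) simp_all

lemma mac_pderiv: "map_poly to_ac (pderiv p) = pderiv (map_poly to_ac p)"
  by (rule poly_eqI) (simp add: coeff_pderiv coeff_map_poly)

lemma mac_one [simp]: "map_poly to_ac 1 = 1"
  by simp

lemma psi_add: "poly (map_poly to_ac (p + q)) a = poly (map_poly to_ac p) a + poly (map_poly to_ac q) a"
  by (simp add: mac_add)

lemma psi_mult: "poly (map_poly to_ac (p * q)) a = poly (map_poly to_ac p) a * poly (map_poly to_ac q) a"
  by (simp add: mac_mult)

lemma evp_add: "evp a b (F + G) = evp a b F + evp a b G"
  unfolding evp_def by (subst map_poly_hom_add) (simp_all add: psi_add)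

lemma evp_mult: "evp a b (F * G) = evp a b F * evp a b G"
  unfolding evp_def by (subst map_poly_hom_mult) (simp_all add: psi_add psi_mult)

lemma evp_cxp: "evp a b (cxp c) = poly (map_poly to_ac c) a"
  unfolding evp_def cxp_def by simp

lemma evp_cyp: "evp a b (cyp m) = poly (map_poly to_ac m) b"
  unfolding evp_def cyp_def by (simp add: map_poly_map_poly o_def)

lemma evp_sxy: "evp a b (sxy P) = poly (map_poly to_ac P) (a + b)"
proof -
  have "evp a b (poly (map_poly (\<lambda>c. [:[:c:]:]) P) (xx + yy))
      = poly (map_poly (\<lambda>c. evp a b [:[:c:]:]) P) (evp a b (xx + yy))"
    by (rule hom_poly_map_poly) (simp_all add: evp_add evp_mult, simp add: evp_def)
  moreover have "(\<lambda>c. evp a b [:[:c:]:]) = to_ac" by (rule ext) (simp add: evp_def)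
  moreover have "evp a b (xx + yy) = a + b"
    by (simp add: evp_add) (simp add: evp_def xx_def yy_def map_poly_pCons)
  ultimately show ?thesis by (simp add: sxy_def lift3_def)
qed

section \<open>Roots of a separable polynomial in the closure\<close>

lemma roots_card:
  fixes m :: "'k::field poly"
  assumes monic: "Polynomial.lead_coeff m = 1" and sep: "u * m + v * pderiv m = 1"
  shows "card {a. poly (map_poly to_ac m) a = 0} = Polynomial.degree m"
proof -
  define mK where "mK = map_poly to_ac m"
  have m0: "m \<noteq> 0" using monic by auto
  have lc: "Polynomial.lead_coeff mK = 1" unfolding mK_def using monic by (simp add: degree_map_poly coeff_map_poly)
  have deg: "Polynomial.degree mK = Polynomial.degree m" unfolding mK_def by (simp add: degree_map_poly monic)
  have mK0: "mK \<noteq> 0" using lc by auto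
  obtain A where sA: "size A = Polynomial.degree mK" and fA: "mK = Polynomial.smult (Polynomial.lead_coeff mK) (\<Prod>x\<in>#A. [:-x, 1:])"
    using alg_closed_imp_factorization[OF mK0] by blast
  have fA': "mK = (\<Prod>x\<in>#A. [:-x, 1:])" using fA lc by simp
  have sepK: "poly (map_poly to_ac u) a * poly mK a + poly (map_poly to_ac v) a * poly (pderiv mK) a = 1" for a
  proof -
    have "map_poly to_ac (u * m + v * pderiv m) = 1" using sep by simp
    hence "map_poly to_ac u * mK + map_poly to_ac v * pderiv mK = 1"
      by (simp add: mac_add mac_mult mac_pderiv mK_def)
    thus ?thesis by (metis poly_1 poly_add poly_mult)
  qed
  have roots: "{a. poly mK a = 0} = set_mset A"
    by (subst fA') (auto simp: poly_prod_mset)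
  have dist: "count A x \<le> 1" for x
  proof (rule ccontr)
    assume "\<not> count A x \<le> 1"
    hence "x \<in># A" by (cases "x \<in># A") (auto simp: not_in_iff)
    then obtain A1 where A1: "A = add_mset x A1" by (metis multi_member_split)
    have "x \<in># A1" using \<open>\<not> count A x \<le> 1\<close> A1 by (cases "x \<in># A1") (auto simp: not_in_iff)
    then obtain A2 where A2: "A1 = add_mset x A2" by (metis multi_member_split)
    define L where "L = [:-x, 1:]"
    define Q where "Q = (\<Prod>y\<in>#A2. [:-y, 1:])"
    have eqm: "mK = L * L * Q"
      unfolding fA' A1 A2 L_def Q_def by (simp only: image_mset_add_mset prod_mset.add_mset mult.assoc)
    have Lx: "poly L x = 0" by (simp add: L_def)
    have "poly mK x = 0" "poly (pderiv mK) x = 0"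
      by (simp_all add: eqm pderiv_mult Lx)
    thus False using sepK[of x] by simp
  qed
  have "card (set_mset A) = size A"
    using dist
  proof (induct A)
    case empty
    then show ?case by simp
  next
    case (add x A)
    have "x \<notin># A" using add(2)[of x] by (simp add: not_in_iff)
    moreover have "count A y \<le> 1" for y using add(2)[of y] by (auto split: if_splits)
    ultimately show ?case using add(1) by simp
  qed
  thus ?thesis using roots sA deg unfolding mK_def by simp
qed

section \<open>Interpolation criterion\<close>

lemma interp:
  fixes m :: "'k::field poly"
  assumes monic: "Polynomial.lead_coeff m = 1" and sep: "u * m + v * pderiv m = 1"
    and van: "\<And>a b. poly (map_poly to_ac m) a = 0 \<Longrightarrow> poly (map_poly to_ac m) b = 0 \<Longrightarrow> evp a b F = 0"
  shows "\<exists>A B. F = A * cxp m + B * cyp m"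
proof -
  define R where "R = {a. poly (map_poly to_ac m) a = 0}"
  define d where "d = Polynomial.degree m"
  have cardR: "card R = d" unfolding R_def d_def by (rule roots_card[OF monic sep])
  have m0: "m \<noteq> 0" using monic by auto
  have lcy: "Polynomial.lead_coeff (cyp m) = 1"
    unfolding cyp_def using monic by (simp add: degree_map_poly coeff_map_poly flip: one_pCons)
  have degy: "Polynomial.degree (cyp m) = d"
    unfolding cyp_def d_def using monic by (simp add: degree_map_poly flip: one_pCons)
  have cy0: "cyp m \<noteq> 0" using lcy by auto
  obtain q r where qr: "pseudo_divmod F (cyp m) = (q, r)" by (cases "pseudo_divmod F (cyp m)") auto
  have F1: "F = cyp m * q + r"
    using pseudo_divmod(1)[OF cy0 qr] lcy by simp
  have r1: "r = 0 \<or> Polynomial.degree r < d"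
    using pseudo_divmod(2)[OF cy0 qr] degy by simp
  define r' where "r' = map_poly (\<lambda>c. c mod m) r"
  define G where "G = map_poly (\<lambda>c. c div m) r"
  have rr: "r = r' + cxp m * G"
    by (rule poly_eqI) (simp add: r'_def G_def coeff_map_poly cxp_def)
  have F2: "F = cyp m * q + cxp m * G + r'" using F1 rr by (simp add: algebra_simps)
  have vr: "evp a b r' = 0" if "a \<in> R" "b \<in> R" for a b
  proof -
    have "evp a b F = evp a b (cyp m) * evp a b q + evp a b (cxp m) * evp a b G + evp a b r'"
      by (subst F2) (simp add: evp_add evp_mult)
    moreover have "evp a b F = 0" using van that unfolding R_def by simp
    moreover have "evp a b (cyp m) = 0" "evp a b (cxp m) = 0"
      using that unfolding R_def by (simp_all add: evp_cyp evp_cxp)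
    ultimately show ?thesis by simp
  qed
  have "r' = 0"
  proof (rule ccontr)
    assume r'0: "r' \<noteq> 0"
    hence "r \<noteq> 0" unfolding r'_def by auto
    hence dr: "Polynomial.degree r < d" using r1 by simp
    have dr': "Polynomial.degree r' < d" using dr map_poly_degree_leq[of _ r] unfolding r'_def
      by (meson le_less_trans)
    have cz: "poly (map_poly to_ac (Polynomial.coeff r' j)) a = 0" if aR: "a \<in> R" for a j
    proof -
      define g where "g = map_poly (\<lambda>c. poly (map_poly to_ac c) a) r'"
      have "g = 0"
      proof (rule poly_eqI_degree[of R])
        show "poly g x = poly 0 x" if "x \<in> R" for x
          using vr[OF aR that] by (simp add: g_def evp_def)
        show "Polynomial.degree g < card R" unfolding cardR g_def
          using dr' map_poly_degree_leq[of _ r'] by (meson le_less_trans)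
        show "Polynomial.degree (0 :: 'k alg_closure poly) < card R" using dr' cardR by simp
      qed
      hence "Polynomial.coeff g j = 0" by simp
      thus ?thesis by (simp add: g_def coeff_map_poly)
    qed
    have "Polynomial.coeff r' j = 0" for j
    proof -
      define c where "c = Polynomial.coeff r' j"
      have cmod: "c = Polynomial.coeff r j mod m" unfolding c_def r'_def by (simp add: coeff_map_poly)
      have "map_poly to_ac c = 0"
      proof (rule poly_eqI_degree[of R])
        show "poly (map_poly to_ac c) x = poly 0 x" if "x \<in> R" for x
          using cz[OF that, of j] by (simp add: c_def)
        show "Polynomial.degree (map_poly to_ac c) < card R"
        proof (cases "c = 0")
          case True
          then show ?thesis using dr' cardR by simp
        next
          case False
          then have "Polynomial.degree c < d" unfolding cmod d_def using m0 False by (simp add: degree_mod_less')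
          then show ?thesis using cardR by (simp add: degree_map_poly)
        qed
        show "Polynomial.degree (0 :: 'k alg_closure poly) < card R" using dr' cardR by simp
      qed
      thus ?thesis unfolding c_def by (simp add: map_poly_eq_0_iff)
    qed
    hence "r' = 0" by (simp add: poly_eqI)
    thus False using r'0 by simp
  qed
  hence "F = G * cxp m + q * cyp m" using F2 by (simp add: algebra_simps)
  thus ?thesis by blast
qed


lemma mac_prod: "map_poly to_ac (\<Prod>s\<in>S. g s) = (\<Prod>s\<in>S. map_poly to_ac (g s))"
  by (induct S rule: infinite_finite_induct) (simp_all add: mac_mult)

lemma bezout_of_coprime:
  fixes a b :: "'k::field poly"
  assumes cop: "coprime a b" and a0: "a \<noteq> 0"
  shows "\<exists>u v. u * a + v * b = 1"
proof -
  define Id where "Id g \<longleftrightarrow> g \<noteq> 0 \<and> (\<exists>u v. g = u * a + v * b)" for g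
  have "Id a" unfolding Id_def using a0 by (intro conjI exI[of _ 1] exI[of _ 0]) simp_all
  then obtain g where Ig: "Id g" and gmin: "\<forall>f. Id f \<longrightarrow> Polynomial.degree g \<le> Polynomial.degree f"
    using ex_has_least_nat[of Id a Polynomial.degree] by blast
  obtain u v where g: "g = u * a + v * b" and g0: "g \<noteq> 0" using Ig unfolding Id_def by blast
  have dv: "g dvd x" if x: "\<exists>s t. x = s * a + t * b" for x
  proof (rule ccontr)
    assume "\<not> g dvd x"
    hence xm0: "x mod g \<noteq> 0" by (simp add: mod_eq_0_iff_dvd)
    obtain s t where xst: "x = s * a + t * b" using x by blast
    have "x mod g = x - x div g * g" by (simp add: minus_div_mult_eq_mod)
    also have "\<dots> = (s - x div g * u) * a + (t - x div g * v) * b"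
      unfolding xst g by (simp add: algebra_simps)
    finally have "Id (x mod g)" unfolding Id_def using xm0 by blast
    hence "Polynomial.degree g \<le> Polynomial.degree (x mod g)" using gmin by blast
    thus False using degree_mod_less'[OF g0 xm0] by simp
  qed
  have "g dvd a" by (rule dv) (intro exI[of _ 1] exI[of _ 0], simp)
  moreover have "g dvd b" by (rule dv) (intro exI[of _ 0] exI[of _ 1], simp)
  ultimately have "is_unit g" using coprime_common_divisor[OF cop] by blast
  then obtain w where "1 = g * w" by (elim dvdE)
  hence "(w * u) * a + (w * v) * b = 1" unfolding g by (simp add: algebra_simps)
  thus ?thesis by blast
qed

lemma coprime_by_roots:
  fixes A B :: "'k::field poly"
  assumes A0: "A \<noteq> 0"
    and nr: "\<And>\<beta>. poly (map_poly to_ac A) \<beta> = 0 \<Longrightarrow> poly (map_poly to_ac B) \<beta> \<noteq> 0"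
  shows "coprime A B"
proof (rule coprimeI)
  fix c assume cA: "c dvd A" and cB: "c dvd B"
  have c0: "c \<noteq> 0" using cA A0 by auto
  show "is_unit c"
  proof (cases "Polynomial.degree c = 0")
    case True
    then obtain c0 where cc: "c = [:c0:]" by (elim degree_eq_zeroE)
    hence "c0 \<noteq> 0" using c0 by simp
    hence "c * [:inverse c0:] = 1" unfolding cc by (simp flip: one_pCons)
    thus ?thesis by (metis dvdI)
  next
    case False
    hence "Polynomial.degree (map_poly to_ac c) > 0" by (simp add: degree_map_poly)
    then obtain \<beta> where cb: "poly (map_poly to_ac c) \<beta> = 0" using alg_closed_imp_poly_has_root by blast
    obtain e1 where "A = c * e1" using cA by (elim dvdE)
    hence "poly (map_poly to_ac A) \<beta> = 0" using cb by (simp add: psi_mult)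
    moreover obtain e2 where "B = c * e2" using cB by (elim dvdE)
    hence "poly (map_poly to_ac B) \<beta> = 0" using cb by (simp add: psi_mult)
    ultimately show ?thesis using nr by blast
  qed
qed

lemma sum_sep:
  fixes m :: "'k::field_char_0 poly"
  assumes monic: "Polynomial.lead_coeff m = 1" and sep: "u * m + v * pderiv m = 1"
  shows "\<exists>P u' v' A B. P \<noteq> 0 \<and> u' * P + v' * pderiv P = 1 \<and> sxy P = A * cxp m + B * cyp m"
proof -
  define R where "R = {a. poly (map_poly to_ac m) a = 0}"
  have m0: "m \<noteq> 0" using monic by auto
  have finR: "finite R" unfolding R_def
    by (rule poly_roots_finite) (simp add: map_poly_eq_0_iff m0)
  define Sums where "Sums = (\<lambda>(a, b). a + b) ` (R \<times> R)"
  have finS: "finite Sums" using finR by (simp add: Sums_def)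
  define V where "V f \<longleftrightarrow> (\<forall>s\<in>Sums. poly (map_poly to_ac f) s = 0)" for f :: "'k poly"
  have ex: "\<forall>s. \<exists>g :: 'k poly. g \<noteq> 0 \<and> poly (map_poly to_ac g) s = 0"
  proof
    fix s :: "'k alg_closure"
    obtain g :: "'k poly" where "g \<noteq> 0" "poly (map_poly to_ac g) s = 0"
      by (rule alg_closure_algebraic)
    thus "\<exists>g :: 'k poly. g \<noteq> 0 \<and> poly (map_poly to_ac g) s = 0" by blast
  qed
  then obtain gs :: "'k alg_closure \<Rightarrow> 'k poly" where gs: "\<forall>s. gs s \<noteq> 0 \<and> poly (map_poly to_ac (gs s)) s = 0"
    by (metis choice)
  define f0 where "f0 = (\<Prod>s\<in>Sums. gs s)"
  have f00: "f0 \<noteq> 0" unfolding f0_def using gs finS by (simp add: prod_zero_iff)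
  have Vf0: "V f0" unfolding V_def
  proof
    fix s assume s: "s \<in> Sums"
    have "poly (map_poly to_ac f0) s = (\<Prod>s'\<in>Sums. poly (map_poly to_ac (gs s')) s)"
      unfolding f0_def mac_prod poly_prod ..
    also have "\<dots> = 0" using s finS gs by (simp add: prod_zero_iff) blast
    finally show "poly (map_poly to_ac f0) s = 0" .
  qed
  obtain P where P: "P \<noteq> 0 \<and> V P" and Pmin: "\<forall>f. f \<noteq> 0 \<and> V f \<longrightarrow> Polynomial.degree P \<le> Polynomial.degree f"
    using ex_has_least_nat[of "\<lambda>f. f \<noteq> 0 \<and> V f" f0 Polynomial.degree] f00 Vf0 by blast
  have sqf: "Polynomial.degree q = 0" if Pq: "P = q * q * r" for q r
  proof -
    have q0: "q \<noteq> 0" and r0: "r \<noteq> 0" using P Pq by auto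
    have "V (q * r)" unfolding V_def
    proof
      fix s assume s: "s \<in> Sums"
      have "poly (map_poly to_ac q) s * poly (map_poly to_ac q) s * poly (map_poly to_ac r) s = 0"
        using P s unfolding V_def Pq by (simp add: psi_mult)
      thus "poly (map_poly to_ac (q * r)) s = 0" by (simp add: psi_mult)
    qed
    hence "Polynomial.degree P \<le> Polynomial.degree (q * r)" using Pmin q0 r0 by simp
    thus ?thesis using q0 r0 unfolding Pq by (simp add: degree_mult_eq)
  qed
  have nocommon: "poly (map_poly to_ac (pderiv P)) \<beta> \<noteq> 0" if Pb: "poly (map_poly to_ac P) \<beta> = 0" for \<beta>
  proof
    assume P'b: "poly (map_poly to_ac (pderiv P)) \<beta> = 0"
    define Z where "Z f \<longleftrightarrow> f \<noteq> 0 \<and> poly (map_poly to_ac f) \<beta> = 0" for f :: "'k poly"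
    have "Z P" using P Pb unfolding Z_def by simp
    then obtain g where Zg: "Z g" and gmin: "\<forall>f. Z f \<longrightarrow> Polynomial.degree g \<le> Polynomial.degree f"
      using ex_has_least_nat[of Z P Polynomial.degree] by blast
    have g0: "g \<noteq> 0" and gb: "poly (map_poly to_ac g) \<beta> = 0" using Zg unfolding Z_def by auto
    have gdvd: "g dvd f" if fb: "poly (map_poly to_ac f) \<beta> = 0" for f
    proof (rule ccontr)
      assume "\<not> g dvd f"
      hence fm0: "f mod g \<noteq> 0" by (simp add: mod_eq_0_iff_dvd)
      have "f = f div g * g + f mod g" by simp
      hence "poly (map_poly to_ac (f mod g)) \<beta> = 0"
        using fb gb by (metis add_0 mult_zero_right psi_add psi_mult)
      hence "Z (f mod g)" using fm0 unfolding Z_def by simp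
      hence "Polynomial.degree g \<le> Polynomial.degree (f mod g)" using gmin by blast
      thus False using degree_mod_less'[OF g0 fm0] by simp
    qed
    have gprime: "g dvd a \<or> g dvd b" if gab: "g dvd a * b" for a b
    proof -
      obtain c where "a * b = g * c" using gab by (elim dvdE)
      hence "poly (map_poly to_ac a) \<beta> * poly (map_poly to_ac b) \<beta> = 0"
        using gb by (metis mult_zero_left psi_mult)
      thus ?thesis using gdvd by auto
    qed
    have gdeg: "Polynomial.degree g \<noteq> 0"
    proof
      assume "Polynomial.degree g = 0"
      then obtain c where "g = [:c:]" by (elim degree_eq_zeroE)
      thus False using g0 gb by simp
    qed
    obtain r where Pr: "P = g * r" using gdvd[OF Pb] by (elim dvdE)
    have "g dvd pderiv P" using gdvd[OF P'b] .
    moreover have "pderiv P = g * pderiv r + r * pderiv g" unfolding Pr by (simp add: pderiv_mult)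
    ultimately have "g dvd r * pderiv g" by (metis dvd_add_right_iff dvd_triv_left)
    hence "g dvd r \<or> g dvd pderiv g" using gprime by blast
    thus False
    proof
      assume "g dvd r"
      then obtain r2 where "r = g * r2" by (elim dvdE)
      hence "P = g * g * r2" using Pr by (simp add: mult.assoc)
      hence "Polynomial.degree g = 0" by (rule sqf)
      thus False using gdeg by simp
    next
      assume pd: "g dvd pderiv g"
      have "pderiv g \<noteq> 0" using gdeg by (simp add: pderiv_eq_0_iff)
      hence "Polynomial.degree g \<le> Polynomial.degree (pderiv g)" using dvd_imp_degree_le[OF pd] by blast
      thus False using gdeg by (simp add: degree_pderiv)
    qed
  qed
  have cop: "coprime P (pderiv P)"
    by (rule coprime_by_roots) (use P nocommon in auto)
  obtain u' v' where bz: "u' * P + v' * pderiv P = 1"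
    using bezout_of_coprime[OF cop] P by blast
  have "\<exists>A B. sxy P = A * cxp m + B * cyp m"
  proof (rule interp[OF monic sep])
    fix a b assume a: "poly (map_poly to_ac m) a = 0" and b: "poly (map_poly to_ac m) b = 0"
    have "a + b \<in> Sums" unfolding Sums_def R_def using a b by force
    thus "evp a b (sxy P) = 0" using P unfolding V_def by (simp add: evp_sxy)
  qed
  thus ?thesis using P bz by blast
qed


lemma fun_sum_apply: "(\<Sum>i\<in>A. f i) x = (\<Sum>i\<in>A. f i x)"
  for f :: "'i \<Rightarrow> 'a \<Rightarrow> 'b::comm_monoid_add"
  by (induct A rule: infinite_finite_induct) simp_all

lemma vs_fun:
  assumes "vector_space sc"
  shows "vector_space (\<lambda>c (Z::'x \<Rightarrow> 'w::ab_group_add) v. sc c (Z v))"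
  using assms unfolding vector_space_def by (simp add: fun_eq_iff)

lemma (in vector_space) lin_funpow:
  assumes "Vector_Spaces.linear scale scale f"
  shows "Vector_Spaces.linear scale scale (f^^i)"
proof (induct i)
  case 0
  show ?case by (simp add: linear_id[unfolded id_def])
next
  case (Suc i)
  show ?case using Vector_Spaces.linear_compose[OF Suc assms] by (simp add: comp_def)
qed

theorem lemma3p5:
  fixes scale :: "'k::field_char_0 \<Rightarrow> 'v::ab_group_add \<Rightarrow> 'v"
    and B :: "'v set" and m :: "'v \<Rightarrow> 'v \<Rightarrow> 'v" and e :: 'v
    and a :: 'v and S N :: "'v \<Rightarrow> 'v"
  assumes "fd_unital_algebra scale B m e"
    and "a \<in> LN_alt m"
    and "Vector_Spaces.linear scale scale S"
    and "Vector_Spaces.linear scale scale N"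
    and "Lmul m a = (\<lambda>v. S v + N v)"
    and "S \<circ> N = N \<circ> S"
    and "semisimple_endo scale S"
    and "nilpotent_endo N"
  shows "\<exists>a_s a_n. a_s \<in> LN_alt m \<and> a_n \<in> LN_alt m \<and>
           S = Lmul m a_s \<and> N = Lmul m a_n"
proof -
  note linS = assms(3) and linN = assms(4)
  have fd: "finite_dimensional_vector_space scale B"
    and linL: "\<And>x. Vector_Spaces.linear scale scale (m x)"
    and linR: "\<And>y. Vector_Spaces.linear scale scale (\<lambda>x. m x y)"
    and unitL: "\<And>x. m e x = x" and unitR: "\<And>x. m x e = x"
    using assms(1) unfolding fd_unital_algebra_def by auto
  have vs: "vector_space scale" using fd unfolding finite_dimensional_vector_space_def by blast
  interpret V: vector_space scale by (rule vs)
  have finB: "finite B" using fd by (rule finite_dimensional_vector_space.finite_Basis)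
  have indB: "V.independent B" using fd by (rule finite_dimensional_vector_space.independent_Basis)
  have spanB: "V.span B = UNIV" using fd by (rule finite_dimensional_vector_space.span_Basis)

  have mL_add: "m x (y + z) = m x y + m x z" for x y z using V.lin_add[OF linL] .
  have mL_scale: "m x (scale c y) = scale c (m x y)" for x c y using V.lin_scale[OF linL] .
  have mL_diff: "m x (y - z) = m x y - m x z" for x y z using V.lin_diff[OF linL] .
  have mR_add: "m (x + y) z = m x z + m y z" for x y z using V.lin_add[OF linR[of z]] .
  have mR_scale: "m (scale c x) z = scale c (m x z)" for x c z using V.lin_scale[OF linR[of z]] .
  have mR_diff: "m (x - y) z = m x z - m y z" for x y z using V.lin_diff[OF linR[of z]] .
  have mR_zero: "m 0 z = 0" for z using V.lin_zero[OF linR[of z]] .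
  have T: "m a v = S v + N v" for v using assms(5) unfolding Lmul_def by (simp add: fun_eq_iff)
  have LNa: "m (m a x) y - m a (m x y) = - (m (m x a) y - m x (m a y))" for x y
    using assms(2) unfolding LN_alt_def associator_def by blast
  have SN: "S (N v) = N (S v)" for v using assms(6) by (simp add: fun_eq_iff)

  text \<open>Projection onto linear maps\<close>
  define pr where "pr Z = (\<lambda>v. \<Sum>b\<in>B. scale (V.representation B v b) (Z b))" for Z :: "'v \<Rightarrow> 'v"
  have rep_lin: "Vector_Spaces.linear scale (*) (\<lambda>v. V.representation B v b)" for b
    by (rule V.linear_representation[OF indB spanB])
  have rep_add: "V.representation B (x + y) b = V.representation B x b + V.representation B y b" for x y b
    using rep_lin[of b] by (simp add: Vector_Spaces.linear_iff)
  have rep_scale: "V.representation B (scale c x) b = c * V.representation B x b" for c x b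
    using rep_lin[of b] by (simp add: Vector_Spaces.linear_iff)
  have pr_fix: "pr Z = Z" if lZ: "Vector_Spaces.linear scale scale Z" for Z
  proof
    fix v
    have "Z v = Z (\<Sum>b\<in>B. scale (V.representation B v b) b)"
      using V.sum_representation_eq[OF indB _ finB subset_refl, of v] spanB by simp
    also have "\<dots> = pr Z v" unfolding pr_def by (simp add: V.lin_sum[OF lZ] V.lin_scale[OF lZ])
    finally show "pr Z v = Z v" by simp
  qed
  have pr_lin: "Vector_Spaces.linear scale scale (pr Z)" for Z
    by (rule V.linI) (simp_all add: pr_def rep_add rep_scale V.scale_left_distrib sum.distrib V.scale_sum_right)
  have pr_add: "pr (Z1 + Z2) = pr Z1 + pr Z2" for Z1 Z2
    by (simp add: pr_def fun_eq_iff V.scale_right_distrib sum.distrib)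

  define scW where "scW = (\<lambda>c (Z::'v \<Rightarrow> 'v) v. scale c (Z v))"
  have vsW: "vector_space scW" unfolding scW_def by (rule vs_fun[OF vs])
  interpret W: vector_space scW by (rule vsW)
  have pr_sc: "pr (scW c Z) = scW c (pr Z)" for c Z
    by (simp add: pr_def scW_def fun_eq_iff V.scale_sum_right mult.commute)

  define XS where "XS = (\<lambda>Z. S \<circ> pr Z)"
  define YS where "YS = (\<lambda>Z. pr Z \<circ> S)"
  define XN where "XN = (\<lambda>Z. N \<circ> pr Z)"
  define YN where "YN = (\<lambda>Z. pr Z \<circ> N)"
  have linXS: "Vector_Spaces.linear scW scW XS"
    by (rule W.linI) (simp_all add: XS_def pr_add pr_sc pr_sc[unfolded scW_def] fun_eq_iff V.lin_add[OF linS] V.lin_scale[OF linS] scW_def)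
  have linXN: "Vector_Spaces.linear scW scW XN"
    by (rule W.linI) (simp_all add: XN_def pr_add pr_sc pr_sc[unfolded scW_def] fun_eq_iff V.lin_add[OF linN] V.lin_scale[OF linN] scW_def)
  have linYS: "Vector_Spaces.linear scW scW YS"
    by (rule W.linI) (simp_all add: YS_def pr_add pr_sc pr_sc[unfolded scW_def] fun_eq_iff scW_def)
  have linYN: "Vector_Spaces.linear scW scW YN"
    by (rule W.linI) (simp_all add: YN_def pr_add pr_sc pr_sc[unfolded scW_def] fun_eq_iff scW_def)
  have linc: "Vector_Spaces.linear scale scale (f \<circ> g)"
    if "Vector_Spaces.linear scale scale f" "Vector_Spaces.linear scale scale g" for f g
    using Vector_Spaces.linear_compose[OF that(2) that(1)] .
  have prS1: "pr (S \<circ> pr Z) = S \<circ> pr Z" for Z by (rule pr_fix[OF linc[OF linS pr_lin]])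
  have prS2: "pr (pr Z \<circ> S) = pr Z \<circ> S" for Z by (rule pr_fix[OF linc[OF pr_lin linS]])
  have prN1: "pr (N \<circ> pr Z) = N \<circ> pr Z" for Z by (rule pr_fix[OF linc[OF linN pr_lin]])
  have prN2: "pr (pr Z \<circ> N) = pr Z \<circ> N" for Z by (rule pr_fix[OF linc[OF pr_lin linN]])
  have SNc: "S \<circ> N = N \<circ> S" by (rule assms(6))
  have c1: "XS (YS Z) = YS (XS Z)" for Z by (simp add: XS_def YS_def prS1 prS2 o_assoc)
  have c2: "XN (YN Z) = YN (XN Z)" for Z by (simp add: XN_def YN_def prN1 prN2 o_assoc)
  have c3: "XS (XN Z) = XN (XS Z)" for Z by (simp add: XS_def XN_def prS1 prN1 o_assoc SNc)
  have c4: "XS (YN Z) = YN (XS Z)" for Z by (simp add: XS_def YN_def prS1 prN2 o_assoc)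
  have c5: "YS (XN Z) = XN (YS Z)" for Z by (simp add: YS_def XN_def prS2 prN1 o_assoc)
  have c6: "YS (YN Z) = YN (YS Z)" for Z by (simp add: YS_def YN_def prS2 prN2 comp_assoc flip: SNc)

  interpret C1: comm_pair scW XS YS
    unfolding comm_pair_def comm_pair_axioms_def using vsW linXS linYS c1 by blast
  interpret C2: comm_pair scW XN YN
    unfolding comm_pair_def comm_pair_axioms_def using vsW linXN linYN c2 by blast
  define SIG where "SIG = ev2 scW (xx + yy) XS YS"
  define NU where "NU = ev2 scW (xx + yy) XN YN"
  have SIG_eq: "SIG Z = XS Z + YS Z" for Z
    unfolding SIG_def C1.ev2_add xx_def yy_def C1.ev2_X C1.ev2_Y ..
  have NU_eq: "NU Z = XN Z + YN Z" for Z
    unfolding NU_def C2.ev2_add xx_def yy_def C2.ev2_X C2.ev2_Y ..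
  have linSIG: "Vector_Spaces.linear scW scW SIG" unfolding SIG_def by (rule C1.ev2_linear)
  have linNU: "Vector_Spaces.linear scW scW NU" unfolding NU_def by (rule C2.ev2_linear)
  have SIGNU: "SIG (NU Z) = NU (SIG Z)" for Z
    by (simp add: SIG_eq NU_eq W.lin_add[OF linXS] W.lin_add[OF linYS] W.lin_add[OF linXN] W.lin_add[OF linYN]
        c3 c4 c5 c6 ac_simps)
  interpret C3: comm_pair scW SIG NU
    unfolding comm_pair_def comm_pair_axioms_def using vsW linSIG linNU SIGNU by blast
  define PSI where "PSI = ev2 scW (xx + yy) SIG NU"
  have PSI_eq: "PSI Z = SIG Z + NU Z" for Z
    unfolding PSI_def C3.ev2_add xx_def yy_def C3.ev2_X C3.ev2_Y ..
  have linPSI: "Vector_Spaces.linear scW scW PSI" unfolding PSI_def by (rule C3.ev2_linear)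

  obtain p where p0: "p \<noteq> 0" and pcop: "coprime p (pderiv p)" and pS: "poly_endo scale p S = (\<lambda>_. 0)"
    using assms(7) unfolding semisimple_endo_def by blast
  obtain up vp where bzp: "up * p + vp * pderiv p = 1" using bezout_of_coprime[OF pcop p0] by blast
  obtain m0 where m00: "m0 \<noteq> 0" and m0c: "Polynomial.coeff m0 0 = 0"
    and m0S: "poly_endo scale m0 S = (\<lambda>_. 0)" and m0b: "\<exists>u v. u * m0 + v * pderiv m0 = 1"
  proof (cases "Polynomial.coeff p 0 = 0")
    case True
    then show ?thesis using that[of p] p0 pS bzp by blast
  next
    case False
    define m1 where "m1 = pCons 0 p"
    have "m1 \<noteq> 0" using p0 by (simp add: m1_def)
    moreover have "Polynomial.coeff m1 0 = 0" by (simp add: m1_def)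
    moreover have "poly_endo scale m1 S = (\<lambda>_. 0)"
      by (rule ext) (simp add: m1_def V.pe_pCons[OF linS] pS V.lin_zero[OF linS])
    moreover have "\<exists>u v. u * m1 + v * pderiv m1 = 1"
    proof -
      have "coprime m1 (pderiv m1)"
      proof (rule coprime_by_roots)
        show "m1 \<noteq> 0" using p0 by (simp add: m1_def)
      next
        fix \<beta> assume r: "poly (map_poly to_ac m1) \<beta> = 0"
        have bz: "poly (map_poly to_ac up) \<beta> * poly (map_poly to_ac p) \<beta>
            + poly (map_poly to_ac vp) \<beta> * poly (map_poly to_ac (pderiv p)) \<beta> = 1"
          using arg_cong[OF bzp, of "\<lambda>q. poly (map_poly to_ac q) \<beta>"] by (simp add: psi_add psi_mult)
        have e1: "poly (map_poly to_ac m1) \<beta> = \<beta> * poly (map_poly to_ac p) \<beta>"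
          by (simp add: m1_def map_poly_pCons)
        have e2: "poly (map_poly to_ac (pderiv m1)) \<beta> = poly (map_poly to_ac p) \<beta> + \<beta> * poly (map_poly to_ac (pderiv p)) \<beta>"
          by (simp add: m1_def pderiv_pCons psi_add map_poly_pCons)
        show "poly (map_poly to_ac (pderiv m1)) \<beta> \<noteq> 0"
        proof (cases "\<beta> = 0")
          case True
          have "poly (map_poly to_ac p) 0 = to_ac (Polynomial.coeff p 0)"
            by (simp add: poly_0_coeff_0 coeff_map_poly)
          then show ?thesis using True False e2 by simp
        next
          case b0: False
          hence pb: "poly (map_poly to_ac p) \<beta> = 0" using r e1 by simp
          hence "poly (map_poly to_ac (pderiv p)) \<beta> \<noteq> 0" using bz by auto
          then show ?thesis using e2 pb b0 by simp
        qed
      qed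
      thus ?thesis using bezout_of_coprime \<open>m1 \<noteq> 0\<close> by blast
    qed
    ultimately show ?thesis using that by blast
  qed
  obtain u0 v0 where bz0: "u0 * m0 + v0 * pderiv m0 = 1" using m0b by blast
  define lc where "lc = Polynomial.lead_coeff m0"
  have lc0: "lc \<noteq> 0" using m00 by (simp add: lc_def)
  define mm where "mm = Polynomial.smult (inverse lc) m0"
  have mmmon: "Polynomial.lead_coeff mm = 1" using lc0 by (simp add: mm_def lc_def)
  have mmc: "Polynomial.coeff mm 0 = 0" using m0c by (simp add: mm_def)
  have mmS: "poly_endo scale mm S v = 0" for v
    using m0S by (simp add: mm_def V.pe_smult fun_eq_iff)
  have bzm: "Polynomial.smult lc u0 * mm + Polynomial.smult lc v0 * pderiv mm = 1"
    using bz0 lc0 by (simp add: mm_def pderiv_smult)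
  obtain P u' v' A B where P0: "P \<noteq> 0" and bzP: "u' * P + v' * pderiv P = 1"
    and PA: "sxy P = A * cxp mm + B * cyp mm"
    using sum_sep[OF mmmon bzm] by blast
  obtain K0 where NK0: "N^^K0 = (\<lambda>_. 0)" using assms(8) unfolding nilpotent_endo_def by blast
  define K where "K = Suc K0"
  have NK: "(N^^K) v = 0" for v using NK0 V.lin_zero[OF linN] by (simp add: K_def fun_eq_iff)
  obtain h A2 B2 where hh: "sxy h - xx = A2 * cxp P + B2 * yy ^ (K + K)"
    using hensel2[OF bzP] by blast
  obtain A3 B3 :: "'k poly poly" where nn: "(xx + yy :: 'k poly poly) ^ (K + K) = A3 * xx ^ K + B3 * yy ^ K"
    using nil2 by blast

  have linSp: "Vector_Spaces.linear scale scale (S^^i)" for i by (rule V.lin_funpow[OF linS])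
  have linNp: "Vector_Spaces.linear scale scale (N^^i)" for i by (rule V.lin_funpow[OF linN])
  have XSpow: "(XS^^Suc i) Z = (S^^Suc i) \<circ> pr Z" for i Z
  proof (induct i)
    case 0 show ?case by (simp add: XS_def)
  next
    case (Suc i)
    have "(XS^^Suc (Suc i)) Z = XS ((XS^^Suc i) Z)" by (simp only: funpow.simps comp_apply)
    also have "\<dots> = S \<circ> pr ((S^^Suc i) \<circ> pr Z)" unfolding Suc by (simp only: XS_def)
    also have "pr ((S^^Suc i) \<circ> pr Z) = (S^^Suc i) \<circ> pr Z" by (rule pr_fix[OF linc[OF linSp pr_lin]])
    finally show ?case by (simp add: o_assoc)
  qed
  have YSpow: "(YS^^Suc i) Z = pr Z \<circ> (S^^Suc i)" for i Z
  proof (induct i)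
    case 0 show ?case by (simp add: YS_def)
  next
    case (Suc i)
    have "(YS^^Suc (Suc i)) Z = YS ((YS^^Suc i) Z)" by (simp only: funpow.simps comp_apply)
    also have "\<dots> = pr (pr Z \<circ> (S^^Suc i)) \<circ> S" unfolding Suc by (simp only: YS_def)
    also have "pr (pr Z \<circ> (S^^Suc i)) = pr Z \<circ> (S^^Suc i)" by (rule pr_fix[OF linc[OF pr_lin linSp]])
    finally show ?case by (simp add: o_assoc funpow_Suc_right del: funpow.simps)
  qed
  have XNpow: "(XN^^Suc i) Z = (N^^Suc i) \<circ> pr Z" for i Z
  proof (induct i)
    case 0 show ?case by (simp add: XN_def)
  next
    case (Suc i)
    have "(XN^^Suc (Suc i)) Z = XN ((XN^^Suc i) Z)" by (simp only: funpow.simps comp_apply)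
    also have "\<dots> = N \<circ> pr ((N^^Suc i) \<circ> pr Z)" unfolding Suc by (simp only: XN_def)
    also have "pr ((N^^Suc i) \<circ> pr Z) = (N^^Suc i) \<circ> pr Z" by (rule pr_fix[OF linc[OF linNp pr_lin]])
    finally show ?case by (simp add: o_assoc)
  qed
  have YNpow: "(YN^^Suc i) Z = pr Z \<circ> (N^^Suc i)" for i Z
  proof (induct i)
    case 0 show ?case by (simp add: YN_def)
  next
    case (Suc i)
    have "(YN^^Suc (Suc i)) Z = YN ((YN^^Suc i) Z)" by (simp only: funpow.simps comp_apply)
    also have "\<dots> = pr (pr Z \<circ> (N^^Suc i)) \<circ> N" unfolding Suc by (simp only: YN_def)
    also have "pr (pr Z \<circ> (N^^Suc i)) = pr Z \<circ> (N^^Suc i)" by (rule pr_fix[OF linc[OF pr_lin linNp]])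
    finally show ?case by (simp add: o_assoc funpow_Suc_right del: funpow.simps)
  qed
  have peXS: "poly_endo scW mm XS Z = 0" for Z
  proof
    fix v
    have "poly_endo scW mm XS Z v = (\<Sum>i\<le>Polynomial.degree mm. scale (Polynomial.coeff mm i) ((XS^^i) Z v))"
      by (simp add: poly_endo_def fun_sum_apply scW_def)
    also have "\<dots> = (\<Sum>i\<le>Polynomial.degree mm. scale (Polynomial.coeff mm i) ((S^^i) (pr Z v)))"
    proof (rule sum.cong)
      fix i show "scale (Polynomial.coeff mm i) ((XS^^i) Z v) = scale (Polynomial.coeff mm i) ((S^^i) (pr Z v))"
        by (cases i) (simp_all add: mmc XSpow del: funpow.simps)
    qed simp
    also have "\<dots> = poly_endo scale mm S (pr Z v)" by (simp add: poly_endo_def)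
    finally show "poly_endo scW mm XS Z v = 0 v" by (simp add: mmS)
  qed
  have peYS: "poly_endo scW mm YS Z = 0" for Z
  proof
    fix v
    have "poly_endo scW mm YS Z v = (\<Sum>i\<le>Polynomial.degree mm. scale (Polynomial.coeff mm i) ((YS^^i) Z v))"
      by (simp add: poly_endo_def fun_sum_apply scW_def)
    also have "\<dots> = (\<Sum>i\<le>Polynomial.degree mm. pr Z (scale (Polynomial.coeff mm i) ((S^^i) v)))"
    proof (rule sum.cong)
      fix i show "scale (Polynomial.coeff mm i) ((YS^^i) Z v) = pr Z (scale (Polynomial.coeff mm i) ((S^^i) v))"
        by (cases i) (simp_all add: mmc YSpow V.lin_scale[OF pr_lin] V.lin_zero[OF pr_lin] del: funpow.simps)
    qed simp
    also have "\<dots> = pr Z (poly_endo scale mm S v)" by (simp add: poly_endo_def V.lin_sum[OF pr_lin])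
    finally show "poly_endo scW mm YS Z v = 0 v" by (simp add: mmS V.lin_zero[OF pr_lin])
  qed
  have XNK: "(XN^^K) Z = 0" for Z
    unfolding K_def XNpow by (simp add: fun_eq_iff NK[unfolded K_def] del: funpow.simps)
  have YNK: "(YN^^K) Z = 0" for Z
    unfolding K_def YNpow by (simp add: fun_eq_iff NK[unfolded K_def] V.lin_zero[OF pr_lin] del: funpow.simps)

  have PSIG: "poly_endo scW P SIG Z = 0" for Z
  proof -
    have "poly_endo scW P SIG Z = ev2 scW (sxy P) XS YS Z"
      unfolding SIG_def sxy_def lift3_def C1.ev2_lift ..
    also have "\<dots> = ev2 scW A XS YS (poly_endo scW mm XS Z) + ev2 scW B XS YS (poly_endo scW mm YS Z)"
      unfolding PA C1.ev2_add C1.ev2_mult cxp_def cyp_def C1.ev2_const C1.ev2_cy ..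
    also have "\<dots> = 0" by (simp add: peXS peYS W.lin_zero[OF C1.ev2_linear])
    finally show ?thesis .
  qed
  have NUK: "(NU^^(K + K)) Z = 0" for Z
  proof -
    have e1: "ev2 scW xx XN YN = XN" by (rule ext) (simp only: xx_def C2.ev2_X)
    have e2: "ev2 scW yy XN YN = YN" by (rule ext) (simp only: yy_def C2.ev2_Y)
    have "(NU^^(K + K)) Z = ev2 scW ((xx + yy) ^ (K + K)) XN YN Z"
      unfolding NU_def C2.ev2_power ..
    also have "\<dots> = ev2 scW A3 XN YN ((XN^^K) Z) + ev2 scW B3 XN YN ((YN^^K) Z)"
      unfolding nn C2.ev2_add C2.ev2_mult C2.ev2_power e1 e2 ..
    also have "\<dots> = 0" by (simp add: XNK YNK W.lin_zero[OF C2.ev2_linear])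
    finally show ?thesis .
  qed
  have MAIN: "poly_endo scW h PSI Z = SIG Z" for Z
  proof -
    have sh: "sxy h = xx + (A2 * cxp P + B2 * yy ^ (K + K))" using hh by (simp add: algebra_simps)
    have e1: "ev2 scW xx SIG NU = SIG" by (rule ext) (simp only: xx_def C3.ev2_X)
    have e2: "ev2 scW yy SIG NU = NU" by (rule ext) (simp only: yy_def C3.ev2_Y)
    have "poly_endo scW h PSI Z = ev2 scW (sxy h) SIG NU Z"
      unfolding PSI_def sxy_def lift3_def C3.ev2_lift ..
    also have "\<dots> = SIG Z + (ev2 scW A2 SIG NU (poly_endo scW P SIG Z) + ev2 scW B2 SIG NU ((NU^^(K + K)) Z))"
      unfolding sh C3.ev2_add C3.ev2_mult cxp_def C3.ev2_const C3.ev2_power e1 e2 ..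
    also have "\<dots> = SIG Z" by (simp add: PSIG NUK W.lin_zero[OF C3.ev2_linear])
    finally show ?thesis .
  qed

  define M where "M = (\<lambda>w. m a w + m w a)"
  have linM: "Vector_Spaces.linear scale scale M"
    by (rule V.linI) (simp_all add: M_def mL_add mR_add mL_scale mR_scale V.scale_right_distrib ac_simps)
  have prm: "pr (m w) = m w" for w by (rule pr_fix[OF linL])
  have PSI_m: "PSI (m w) = m (M w)" for w
  proof
    fix y
    have "PSI (m w) y = S (m w y) + m w (S y) + (N (m w y) + m w (N y))"
      by (simp add: PSI_eq SIG_eq NU_eq XS_def YS_def XN_def YN_def prm)
    also have "\<dots> = m a (m w y) + m w (m a y)" by (simp add: T mL_add ac_simps)
    also have "\<dots> = m (M w) y" using LNa[of w y] by (simp add: M_def mR_add algebra_simps)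
    finally show "PSI (m w) y = m (M w) y" .
  qed
  have pe_m: "poly_endo scW g PSI (m x) = m (poly_endo scale g M x)" for g x
  proof (induct g arbitrary: x)
    case 0
    show ?case by (simp add: fun_eq_iff mR_zero)
  next
    case (pCons c g)
    have "poly_endo scW (pCons c g) PSI (m x) = scW c (m x) + PSI (poly_endo scW g PSI (m x))"
      by (rule W.pe_pCons[OF linPSI])
    also have "\<dots> = scW c (m x) + m (M (poly_endo scale g M x))" by (simp only: pCons(2) PSI_m)
    also have "\<dots> = m (poly_endo scale (pCons c g) M x)"
      by (simp add: V.pe_pCons[OF linM] fun_eq_iff mR_add mR_scale scW_def)
    finally show ?case .
  qed
  define M' where "M' = poly_endo scale h M"
  have key: "S (m x y) + m x (S y) = m (M' x) y" for x y
  proof -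
    have "SIG (m x) = m (M' x)" using MAIN[of "m x"] pe_m[of h x] by (simp add: M'_def)
    hence "SIG (m x) y = m (M' x) y" by simp
    thus ?thesis by (simp add: SIG_eq XS_def YS_def prm)
  qed
  define b where "b = scale (inverse 2) (M' e)"
  have Sb: "S y = m b y" for y
  proof -
    have "S y + S y = m (M' e) y" using key[of e y] by (simp add: unitL)
    hence "scale 2 (S y) = m (M' e) y" by (simp add: V.scale_left_distrib[of 1 1, simplified] mult_2)
    hence "scale (inverse 2) (scale 2 (S y)) = m b y" by (simp add: b_def mR_scale)
    thus ?thesis by simp
  qed
  have Se: "S e = b" using Sb[of e] unitR by simp
  have key2: "S x + m x b = M' x" for x using key[of x e] by (simp add: unitR Se)
  have bLN: "b \<in> LN_alt m"
    unfolding LN_alt_def associator_def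
  proof (intro CollectI allI)
    fix x y
    have "m (M' x) y = m (S x) y + m (m x b) y" by (simp add: key2[symmetric] mR_add)
    hence "S (m x y) + m x (S y) = m (S x) y + m (m x b) y" using key[of x y] by simp
    hence "m b (m x y) + m x (m b y) = m (m b x) y + m (m x b) y" by (simp add: Sb)
    thus "m (m b x) y - m b (m x y) = - (m (m x b) y - m x (m b y))" by (simp add: algebra_simps)
  qed
  have abLN: "a - b \<in> LN_alt m"
    unfolding LN_alt_def associator_def
  proof (intro CollectI allI)
    fix x y
    have h1: "m (m a x) y - m a (m x y) = - (m (m x a) y - m x (m a y))" by (rule LNa)
    have h2: "m (m b x) y - m b (m x y) = - (m (m x b) y - m x (m b y))"
      using bLN unfolding LN_alt_def associator_def by blast
    show "m (m (a - b) x) y - m (a - b) (m x y) = - (m (m x (a - b)) y - m x (m (a - b) y))"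
      using h1 h2 by (simp add: mR_diff mL_diff algebra_simps)
  qed
  have "S = Lmul m b" by (simp add: Lmul_def fun_eq_iff Sb)
  moreover have "N = Lmul m (a - b)"
  proof -
    have "N y = m (a - b) y" for y using T[of y] Sb[of y] by (simp add: mR_diff)
    thus ?thesis by (simp add: Lmul_def fun_eq_iff)
  qed
  ultimately show ?thesis using bLN abLN by blast
qed


end
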